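(* The transition function $F$, considered as an operator on the real Banach space $\mathcal M(\mathcal P(S))$ of signed Radon measures on $\mathcal P(S)$ with the total variation norm, is linear with operator norm $\|F\|=1$.
   Context: $T$ is an $n\times n$ stochastic matrix (transition matrix of a Markov chain on $S=\{1,\dots,n\}$); $O$ is a finite index set and for each $i\in O$, $M^{(i)}$ is an $n\times m$ stochastic matrix (observation matrix, observations in $V=\{1,\dots,m\}$). $\mathcal P(S)$ is the probability simplex in $\mathbb R^n$, $\delta(x)$ the point mass at $x\in S$. A (measurable) policy $g:\mathcal P(S)\to O$ has preimages $A_i=g^{-1}\{i\}$. $\alpha_{i,y}(z)=(zTM^{(i)})_y$ and, when $\alpha_{i,y}(z)>0$, $r_{i,y}(z)=\frac{\sum_{x,j}M^{(i)}_{x,y}T_{j,x}z_j\delta(x)}{\sum_{x,j}M^{(i)}_{x,y}T_{j,x}z_j}\in\mathcal P(S)$. The transition function is $F(\mu)=\sum_{i\in O}\sum_{y\in V}\int_{A_i}\alpha_{i,y}(z)\,\delta_{r_{i,y}(z)}\,d\mu(z)$ (terms with $\alpha_{i,y}(z)=0$ contribute zero), defined for signed Radon measures $\mu$ on $\mathcal P(S)$; it maps probability measures to probability measures. *)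

theory Defs
  imports "HOL-Analysis.Analysis" "HOL-Probability.Probability"
begin

text \<open>States S = the finite type 'n, observations V = the finite type 'm,
  observation indices O = the finite type 'o.  Points of P(S) are vectors
  z :: real^'n in the probability simplex.\<close>

definition prob_simplex :: "(real^'n::finite) set" where
  "prob_simplex = {z. (\<forall>j. 0 \<le> z $ j) \<and> (\<Sum>j\<in>UNIV. z $ j) = 1}"

definition PS :: "(real^'n::finite) measure" where
  "PS = restrict_space borel prob_simplex"

definition stochastic :: "real^'b::finite^'a::finite \<Rightarrow> bool" where
  "stochastic A \<longleftrightarrow> (\<forall>i j. 0 \<le> A $ i $ j) \<and> (\<forall>i. (\<Sum>j\<in>UNIV. A $ i $ j) = 1)"

text \<open>Signed (finite, real valued) Borel measures on P(S), represented as set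
  functions that vanish off the Borel sets.  Since P(S) is a compact metric space,
  every such measure is Radon.\<close>
definition signed_measures :: "((real^'n::finite) set \<Rightarrow> real) set" where
  "signed_measures = {\<mu>. (\<forall>A. A \<notin> sets PS \<longrightarrow> \<mu> A = 0) \<and> \<mu> {} = 0 \<and>
     (\<forall>E::nat \<Rightarrow> (real^'n) set. range E \<subseteq> sets PS \<longrightarrow> disjoint_family E \<longrightarrow>
        (\<lambda>k. \<mu> (E k)) sums \<mu> (\<Union>k. E k))}"

definition tv_norm :: "((real^'n::finite) set \<Rightarrow> real) \<Rightarrow> real" where
  "tv_norm \<mu> = Sup {(\<Sum>i<k. \<bar>\<mu> (E i)\<bar>) | (k::nat) E. (\<forall>i<k. E i \<in> sets PS) \<and>
       disjoint_family_on E {..<k} \<and> (\<Union>i<k. E i) = prob_simplex}"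

definition jordan_pos :: "((real^'n::finite) set \<Rightarrow> real) \<Rightarrow> (real^'n) measure" where
  "jordan_pos \<mu> = measure_of prob_simplex (sets PS)
     (\<lambda>A. ennreal (SUP C\<in>{C\<in>sets PS. C \<subseteq> A}. \<mu> C))"

definition jordan_neg :: "((real^'n::finite) set \<Rightarrow> real) \<Rightarrow> (real^'n) measure" where
  "jordan_neg \<mu> = jordan_pos (\<lambda>A. - \<mu> A)"

definition signed_integral :: "((real^'n::finite) set \<Rightarrow> real) \<Rightarrow> (real^'n \<Rightarrow> real) \<Rightarrow> real" where
  "signed_integral \<mu> f = (\<integral>z. f z \<partial>jordan_pos \<mu>) - (\<integral>z. f z \<partial>jordan_neg \<mu>)"

text \<open>alpha_{i,y}(z) = (z T M^(i))_y  (z as a row vector).\<close>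
definition alpha :: "real^'n^'n \<Rightarrow> ('o \<Rightarrow> real^'m^'n) \<Rightarrow> 'o \<Rightarrow> 'm \<Rightarrow> real^'n \<Rightarrow> real" where
  "alpha T M i y z = (\<Sum>x\<in>UNIV. (\<Sum>j\<in>UNIV. z $ j * T $ j $ x) * M i $ x $ y)"

text \<open>r_{i,y}(z), the updated belief (a point of P(S)), written as
  sum_x c_x delta(x) with delta(x) the x-th unit vector.\<close>
definition rupd :: "real^'n::finite^'n \<Rightarrow> ('o \<Rightarrow> real^'m::finite^'n) \<Rightarrow> 'o \<Rightarrow> 'm \<Rightarrow> real^'n \<Rightarrow> real^'n" where
  "rupd T M i y z =
     (\<Sum>x\<in>UNIV. ((\<Sum>j\<in>UNIV. M i $ x $ y * T $ j $ x * z $ j) / alpha T M i y z) *\<^sub>R axis x 1)"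

text \<open>The transition function F on signed measures:
  F(mu)(B) = sum_i sum_y int_{A_i} alpha_{i,y}(z) delta_{r_{i,y}(z)}(B) dmu(z),
  terms with alpha = 0 contributing zero; A_i = g^{-1}{i}.\<close>
definition transF :: "real^'n::finite^'n \<Rightarrow> ('o::finite \<Rightarrow> real^'m::finite^'n) \<Rightarrow> (real^'n \<Rightarrow> 'o)
     \<Rightarrow> ((real^'n) set \<Rightarrow> real) \<Rightarrow> ((real^'n) set \<Rightarrow> real)" where
  "transF T M g \<mu> B = (if B \<in> sets PS then
     (\<Sum>i\<in>UNIV. \<Sum>y\<in>UNIV. signed_integral \<mu>
        (\<lambda>z. if g z = i \<and> alpha T M i y z > 0
             then alpha T M i y z * indicator B (rupd T M i y z) else 0))
     else 0)"

end

theory Submission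
  imports Defs
begin



lemma space_PS: "space PS = prob_simplex"
  by (simp add: PS_def space_restrict_space)

lemma sets_PS_sub: "A \<in> sets PS \<Longrightarrow> A \<subseteq> prob_simplex"
  using sets.sets_into_space space_PS by blast

lemma Omega_PS: "prob_simplex \<in> sets PS"
  using sets.top space_PS by metis

lemma sm_add:
  assumes "\<mu> \<in> signed_measures" "A \<in> sets PS" "B \<in> sets PS" "A \<inter> B = {}"
  shows "\<mu> (A \<union> B) = \<mu> A + \<mu> B"
proof -
  define E where "E k = (if k = (0::nat) then A else if k = 1 then B else {})" for k
  have r: "range E \<subseteq> sets PS" using assms by (auto simp: E_def)
  have d: "disjoint_family E" using assms(4) by (auto simp: disjoint_family_on_def E_def)
  have u: "(\<Union>k. E k) = A \<union> B" by (auto simp: E_def split: if_splits)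
  have e: "\<mu> {} = 0" using assms(1) by (simp add: signed_measures_def)
  have s1: "(\<lambda>k. \<mu> (E k)) sums \<mu> (\<Union>k. E k)"
    using assms(1) r d by (auto simp: signed_measures_def)
  then have s1: "(\<lambda>k. \<mu> (E k)) sums \<mu> (A \<union> B)" using u by simp
  have s2: "(\<lambda>k. \<mu> (E k)) sums (\<Sum>k\<in>{0,1}. \<mu> (E k))"
    by (rule sums_finite) (auto simp: E_def e)
  show ?thesis using sums_unique2[OF s1 s2] by (simp add: E_def)
qed

lemma sm_diff:
  assumes "\<mu> \<in> signed_measures" "A \<in> sets PS" "C \<in> sets PS" "C \<subseteq> A"
  shows "\<mu> (A - C) = \<mu> A - \<mu> C"
proof -
  have "\<mu> ((A - C) \<union> C) = \<mu> (A - C) + \<mu> C"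
    using assms by (intro sm_add) auto
  moreover have "(A - C) \<union> C = A" using assms by auto
  ultimately show ?thesis by simp
qed

lemma sm_empty: "\<mu> \<in> signed_measures \<Longrightarrow> \<mu> {} = 0"
  by (simp add: signed_measures_def)

lemma sm_bounded:
  assumes sm: "\<mu> \<in> signed_measures"
  shows "\<exists>B. \<forall>C\<in>sets PS. \<bar>\<mu> C\<bar> \<le> B"
proof (rule ccontr)
  assume nb: "\<not> ?thesis"
  define bad where "bad A \<longleftrightarrow> (\<forall>B. \<exists>C\<in>sets PS. C \<subseteq> A \<and> B < \<bar>\<mu> C\<bar>)" for A
  have b0: "bad prob_simplex"
    using nb sets_PS_sub unfolding bad_def by (meson not_le)
  have split: "\<exists>C. C \<in> sets PS \<and> C \<subseteq> A \<and> 1 \<le> \<bar>\<mu> C\<bar> \<and> bad (A - C)"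
    if A: "A \<in> sets PS" "bad A" for A
  proof -
    obtain C where C: "C \<in> sets PS" "C \<subseteq> A" "\<bar>\<mu> A\<bar> + 1 < \<bar>\<mu> C\<bar>"
      using A(2) unfolding bad_def by blast
    have AC: "\<mu> (A - C) = \<mu> A - \<mu> C" using sm_diff[OF sm A(1) C(1,2)] .
    show ?thesis
    proof (cases "bad (A - C)")
      case True then show ?thesis using C by (intro exI[of _ C]) auto
    next
      case False
      then obtain B1 where B1: "\<And>D. D \<in> sets PS \<Longrightarrow> D \<subseteq> A - C \<Longrightarrow> \<bar>\<mu> D\<bar> \<le> B1"
        unfolding bad_def by (meson not_le)
      have "bad C" unfolding bad_def
      proof
        fix B
        obtain D where D: "D \<in> sets PS" "D \<subseteq> A" "B + B1 < \<bar>\<mu> D\<bar>"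
          using A(2) unfolding bad_def by blast
        have "\<mu> D = \<mu> (D \<inter> C) + \<mu> (D - C)"
          using sm_add[OF sm, of "D \<inter> C" "D - C"] D C Int_Diff_Un[of D C] by auto
        moreover have "\<bar>\<mu> (D - C)\<bar> \<le> B1" using B1[of "D - C"] D C by auto
        ultimately have "B < \<bar>\<mu> (D \<inter> C)\<bar>" using D(3) by linarith
        then show "\<exists>C'\<in>sets PS. C' \<subseteq> C \<and> B < \<bar>\<mu> C'\<bar>" using D C by (intro bexI[of _ "D \<inter> C"]) auto
      qed
      moreover have "A - (A - C) = C" using C by auto
      moreover have "1 \<le> \<bar>\<mu> (A - C)\<bar>" using AC C(3) by linarith
      ultimately show ?thesis using A C by (intro exI[of _ "A - C"]) auto
    qed
  qed
  define step where "step A = (SOME C. C \<in> sets PS \<and> C \<subseteq> A \<and> 1 \<le> \<bar>\<mu> C\<bar> \<and> bad (A - C))" for A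
  have step: "step A \<in> sets PS \<and> step A \<subseteq> A \<and> 1 \<le> \<bar>\<mu> (step A)\<bar> \<and> bad (A - step A)"
    if "A \<in> sets PS" "bad A" for A
    unfolding step_def by (rule someI_ex) (rule split[OF that])
  define S where "S k = ((\<lambda>A. A - step A) ^^ k) prob_simplex" for k
  have S: "S k \<in> sets PS \<and> bad (S k)" for k
  proof (induction k)
    case 0 then show ?case using b0 Omega_PS by (simp add: S_def)
  next
    case (Suc k)
    have "S (Suc k) = S k - step (S k)" by (simp add: S_def)
    then show ?case using step[of "S k"] Suc by auto
  qed
  have Sdec: "S m \<subseteq> S k" if "k \<le> m" for k m
  proof -
    have "S (Suc n) \<subseteq> S n" for n by (auto simp: S_def)
    then show ?thesis by (rule lift_Suc_antimono_le[of S, OF _ that])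
  qed
  define D where "D k = step (S k)" for k
  have D: "D k \<in> sets PS" "D k \<subseteq> S k" "1 \<le> \<bar>\<mu> (D k)\<bar>" for k
    using step[of "S k"] S[of k] by (auto simp: D_def)
  have Dd: "D k \<inter> D m = {}" if "k < m" for k m
  proof -
    have "D m \<subseteq> S (Suc k)" using D(2)[of m] Sdec[of "Suc k" m] that by auto
    also have "S (Suc k) = S k - D k" by (simp add: S_def D_def)
    finally show ?thesis by auto
  qed
  have "disjoint_family D"
    unfolding disjoint_family_on_def
    by (metis Dd inf_commute linorder_neqE_nat)
  then have "(\<lambda>k. \<mu> (D k)) sums \<mu> (\<Union>k. D k)"
    using sm D(1) by (auto simp: signed_measures_def)
  then have "(\<lambda>k. \<mu> (D k)) \<longlonglongrightarrow> 0" using summable_LIMSEQ_zero sums_summable by blast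
  then have "(\<lambda>k. \<bar>\<mu> (D k)\<bar>) \<longlonglongrightarrow> 0" by (rule tendsto_rabs_zero)
  moreover have "\<forall>k. 1 \<le> \<bar>\<mu> (D k)\<bar>" using D(3) by blast
  ultimately have "1 \<le> (0::real)" by (intro LIMSEQ_le_const) auto
  then show False by simp
qed




definition pos :: "((real^'n::finite) set \<Rightarrow> real) \<Rightarrow> (real^'n) set \<Rightarrow> real" where
  "pos \<mu> A = (SUP C\<in>{C\<in>sets PS. C \<subseteq> A}. \<mu> C)"

lemma sm_bdd: "\<mu> \<in> signed_measures \<Longrightarrow> bdd_above (\<mu> ` {C\<in>sets PS. C \<subseteq> A})"
proof -
  assume "\<mu> \<in> signed_measures"
  then obtain B where "\<forall>C\<in>sets PS. \<bar>\<mu> C\<bar> \<le> B" using sm_bounded by blast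
  then show ?thesis by (intro bdd_aboveI2[of _ _ B]) (auto dest: abs_le_D1)
qed

lemma pos_upper: "\<mu> \<in> signed_measures \<Longrightarrow> C \<in> sets PS \<Longrightarrow> C \<subseteq> A \<Longrightarrow> \<mu> C \<le> pos \<mu> A"
  unfolding pos_def by (rule cSUP_upper) (auto intro: sm_bdd)

lemma pos_least: "(\<And>C. C \<in> sets PS \<Longrightarrow> C \<subseteq> A \<Longrightarrow> \<mu> C \<le> x) \<Longrightarrow> pos \<mu> A \<le> x"
  unfolding pos_def by (rule cSUP_least) auto

lemma pos_nonneg: "\<mu> \<in> signed_measures \<Longrightarrow> 0 \<le> pos \<mu> A"
  using pos_upper[of \<mu> "{}" A] by (simp add: sm_empty)

lemma pos_empty: "\<mu> \<in> signed_measures \<Longrightarrow> pos \<mu> {} = 0"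
proof -
  assume sm: "\<mu> \<in> signed_measures"
  have "pos \<mu> {} \<le> 0" by (rule pos_least) (use sm in \<open>auto simp: sm_empty\<close>)
  then show ?thesis using pos_nonneg[OF sm, of "{}"] by simp
qed

lemma pos_mono: "\<mu> \<in> signed_measures \<Longrightarrow> A \<subseteq> B \<Longrightarrow> pos \<mu> A \<le> pos \<mu> B"
  by (intro pos_least pos_upper) auto

lemma pos_super:
  assumes sm: "\<mu> \<in> signed_measures" and X: "X \<in> sets PS" and Y: "Y \<in> sets PS" and d: "X \<inter> Y = {}"
  shows "pos \<mu> X + pos \<mu> Y \<le> pos \<mu> (X \<union> Y)"
proof -
  have "pos \<mu> X \<le> pos \<mu> (X \<union> Y) - \<mu> D" if D: "D \<in> sets PS" "D \<subseteq> Y" for D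
  proof (rule pos_least)
    fix C assume C: "C \<in> sets PS" "C \<subseteq> X"
    have "\<mu> (C \<union> D) = \<mu> C + \<mu> D" using sm_add[OF sm C(1) D(1)] C D d by auto
    moreover have "\<mu> (C \<union> D) \<le> pos \<mu> (X \<union> Y)" using C D by (intro pos_upper[OF sm]) auto
    ultimately show "\<mu> C \<le> pos \<mu> (X \<union> Y) - \<mu> D" by simp
  qed
  then have "pos \<mu> Y \<le> pos \<mu> (X \<union> Y) - pos \<mu> X"
    by (intro pos_least) (auto simp: algebra_simps)
  then show ?thesis by simp
qed

lemma pos_bound: "\<mu> \<in> signed_measures \<Longrightarrow> \<exists>B. \<forall>A. pos \<mu> A \<le> B"
proof -
  assume "\<mu> \<in> signed_measures"
  then obtain B where "\<forall>C\<in>sets PS. \<bar>\<mu> C\<bar> \<le> B" using sm_bounded by blast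
  then show ?thesis by (intro exI[of _ B] allI pos_least) (auto dest: abs_le_D1)
qed

lemma pos_finite_sum:
  assumes sm: "\<mu> \<in> signed_measures" and E: "\<And>i. E i \<in> sets PS" and d: "disjoint_family E"
  shows "(\<Sum>i<(N::nat). pos \<mu> (E i)) \<le> pos \<mu> (\<Union>i<N. E i)"
proof (induction N)
  case 0 then show ?case using pos_empty[OF sm] by simp
next
  case (Suc N)
  have "(\<Sum>i<Suc N. pos \<mu> (E i)) \<le> pos \<mu> (\<Union>i<N. E i) + pos \<mu> (E N)"
    using Suc by simp
  also have "\<dots> \<le> pos \<mu> ((\<Union>i<N. E i) \<union> E N)"
  proof (rule pos_super[OF sm])
    show "(\<Union>i<N. E i) \<inter> E N = {}"
    proof -
      { fix x i assume xi: "x \<in> E i" "i < N" "x \<in> E N"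
        then have "i \<noteq> N" by simp
        then have False using d xi unfolding disjoint_family_on_def by blast }
      then show ?thesis by blast
    qed
  qed (use E in auto)
  also have "(\<Union>i<N. E i) \<union> E N = (\<Union>i<Suc N. E i)" by (auto simp: lessThan_Suc)
  finally show ?case .
qed

lemma pos_sums:
  assumes sm: "\<mu> \<in> signed_measures" and E: "\<And>i. E i \<in> sets PS" and d: "disjoint_family E"
  shows "(\<lambda>i. pos \<mu> (E i)) sums pos \<mu> (\<Union>i. E i)"
proof -
  have ps: "(\<Sum>i<N. pos \<mu> (E i)) \<le> pos \<mu> (\<Union>i. E i)" for N
    by (rule order_trans[OF pos_finite_sum[OF sm E d] pos_mono[OF sm]]) auto
  have summ: "summable (\<lambda>i. pos \<mu> (E i))"
    using ps pos_nonneg[OF sm] by (intro summableI_nonneg_bounded) auto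
  have le1: "suminf (\<lambda>i. pos \<mu> (E i)) \<le> pos \<mu> (\<Union>i. E i)"
    using ps summ by (intro suminf_le_const) auto
  have le2: "pos \<mu> (\<Union>i. E i) \<le> suminf (\<lambda>i. pos \<mu> (E i))"
  proof (rule pos_least)
    fix C assume C: "C \<in> sets PS" "C \<subseteq> (\<Union>i. E i)"
    have CE: "\<And>i. C \<inter> E i \<in> sets PS" using C E by auto
    have "disjoint_family (\<lambda>i. C \<inter> E i)" using d by (auto simp: disjoint_family_on_def)
    moreover have "(\<Union>i. C \<inter> E i) = C" using C by auto
    moreover have "range (\<lambda>i. C \<inter> E i) \<subseteq> sets PS" using CE by auto
    ultimately have s: "(\<lambda>i. \<mu> (C \<inter> E i)) sums \<mu> (\<Union>i. C \<inter> E i)"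
      using sm unfolding signed_measures_def by blast
    then have s: "(\<lambda>i. \<mu> (C \<inter> E i)) sums \<mu> C" using \<open>(\<Union>i. C \<inter> E i) = C\<close> by simp
    have "\<mu> C = (\<Sum>i. \<mu> (C \<inter> E i))" using sums_unique[OF s] by simp
    also have "\<dots> \<le> suminf (\<lambda>i. pos \<mu> (E i))"
      by (rule suminf_le) (use pos_upper[OF sm CE] sums_summable[OF s] summ in auto)
    finally show "\<mu> C \<le> suminf (\<lambda>i. pos \<mu> (E i))" .
  qed
  have "suminf (\<lambda>i. pos \<mu> (E i)) = pos \<mu> (\<Union>i. E i)" using le1 le2 by linarith
  with summable_sums[OF summ] show ?thesis by simp
qed

lemma sm_uminus: "\<mu> \<in> signed_measures \<Longrightarrow> (\<lambda>A. - \<mu> A) \<in> signed_measures"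
  unfolding signed_measures_def by (auto intro: sums_minus)

lemma pos_decomp:
  assumes sm: "\<mu> \<in> signed_measures" and A: "A \<in> sets PS"
  shows "\<mu> A = pos \<mu> A - pos (\<lambda>A. - \<mu> A) A"
proof -
  have "pos \<mu> A \<le> \<mu> A + pos (\<lambda>A. - \<mu> A) A"
  proof (rule pos_least)
    fix C assume C: "C \<in> sets PS" "C \<subseteq> A"
    have "\<mu> C = \<mu> A - \<mu> (A - C)" using sm_diff[OF sm A C] by simp
    moreover have "- \<mu> (A - C) \<le> pos (\<lambda>A. - \<mu> A) A"
      using pos_upper[OF sm_uminus[OF sm], of "A - C" A] C A by auto
    ultimately show "\<mu> C \<le> \<mu> A + pos (\<lambda>A. - \<mu> A) A" by simp
  qed
  moreover have "pos (\<lambda>A. - \<mu> A) A \<le> pos \<mu> A - \<mu> A"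
  proof (rule pos_least)
    fix C assume C: "C \<in> sets PS" "C \<subseteq> A"
    have "- \<mu> C = \<mu> (A - C) - \<mu> A" using sm_diff[OF sm A C] by simp
    moreover have "\<mu> (A - C) \<le> pos \<mu> A"
      using pos_upper[OF sm, of "A - C" A] C A by auto
    ultimately show "- \<mu> C \<le> pos \<mu> A - \<mu> A" by simp
  qed
  ultimately show ?thesis by simp
qed

lemma sigma_PS: "sigma_algebra prob_simplex (sets PS)"
  using sets.sigma_algebra_axioms[of PS, unfolded space_PS] .

lemma jp_sets[simp]: fixes \<mu> :: "(real^'n::finite) set \<Rightarrow> real" shows "sets (jordan_pos \<mu>) = sets PS"
proof -
  have sp: "sets (PS::(real^'n) measure) \<subseteq> Pow prob_simplex" using sets_PS_sub by auto
  show ?thesis unfolding jordan_pos_def using sets_measure_of[OF sp] sigma_algebra.sigma_sets_eq[OF sigma_PS] by simp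
qed

lemma jp_space[simp]: "space (jordan_pos \<mu>) = prob_simplex"
  unfolding jordan_pos_def by (simp add: space_measure_of_conv)

lemma jp_emeasure:
  fixes \<mu> :: "(real^'n::finite) set \<Rightarrow> real"
  assumes sm: "\<mu> \<in> signed_measures" and A: "A \<in> sets PS"
  shows "emeasure (jordan_pos \<mu>) A = ennreal (pos \<mu> A)"
proof -
  have "positive (sets PS) (\<lambda>A. ennreal (pos \<mu> A))"
    unfolding positive_def using pos_empty[OF sm] by simp
  moreover have "countably_additive (sets PS) (\<lambda>A. ennreal (pos \<mu> A))"
    unfolding countably_additive_def
  proof (intro allI impI)
    fix E :: "nat \<Rightarrow> (real^'n) set" assume E: "range E \<subseteq> sets PS" "disjoint_family E"
    have s: "(\<lambda>i. pos \<mu> (E i)) sums pos \<mu> (\<Union>i. E i)"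
      using E by (intro pos_sums[OF sm]) auto
    show "(\<Sum>i. ennreal (pos \<mu> (E i))) = ennreal (pos \<mu> (\<Union> (range E)))"
      using suminf_ennreal2[OF pos_nonneg[OF sm] sums_summable[OF s]] sums_unique[OF s] by simp
  qed
  ultimately show ?thesis unfolding jordan_pos_def pos_def[symmetric]
    by (rule emeasure_measure_of_sigma[OF sigma_PS _ _ A])
qed

lemma jp_finite: "\<mu> \<in> signed_measures \<Longrightarrow> finite_measure (jordan_pos \<mu>)"
  by (rule finite_measureI) (simp add: jp_emeasure Omega_PS)

lemma jp_measure: "\<mu> \<in> signed_measures \<Longrightarrow> A \<in> sets PS \<Longrightarrow> measure (jordan_pos \<mu>) A = pos \<mu> A"
  by (simp add: measure_def jp_emeasure pos_nonneg)

lemma jn_eq: "jordan_neg \<mu> = jordan_pos (\<lambda>A. - \<mu> A)"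
  by (simp add: jordan_neg_def)




lemma meas_PS: "sets M = sets PS \<Longrightarrow> f \<in> borel_measurable PS \<Longrightarrow> f \<in> borel_measurable M"
  by (simp add: measurable_cong_sets[of M PS borel borel])

lemma int_comb_nonneg:
  fixes Ms :: "'i \<Rightarrow> (real^'n::finite) measure" and c :: "'i \<Rightarrow> real"
  assumes ss: "\<And>j. j \<in> I \<Longrightarrow> sets (Ms j) = sets PS"
    and eq: "\<And>A. A \<in> sets PS \<Longrightarrow> (\<Sum>j\<in>I. c j * measure (Ms j) A) = 0"
    and u: "u \<in> borel_measurable PS" "\<And>x. 0 \<le> u x"
  shows "(\<forall>j\<in>I. integrable (Ms j) u) \<longrightarrow> (\<Sum>j\<in>I. c j * integral\<^sup>L (Ms j) u) = 0"
  using u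
proof (induction rule: borel_measurable_induct_real)
  case (set A)
  have "A \<inter> space (Ms j) = A" if "j \<in> I" for j
    using sets_eq_imp_space_eq[OF ss[OF that]] sets_PS_sub[OF set] space_PS by auto
  then show ?case using eq[OF set] by (simp cong: sum.cong)
next
  case (mult v c0)
  show ?case
  proof
    assume int: "\<forall>j\<in>I. integrable (Ms j) (\<lambda>x. c0 * v x)"
    show "(\<Sum>j\<in>I. c j * integral\<^sup>L (Ms j) (\<lambda>x. c0 * v x)) = 0"
    proof (cases "c0 = 0")
      case True then show ?thesis by simp
    next
      case False
      then have "\<forall>j\<in>I. integrable (Ms j) v" using int by simp
      then have "(\<Sum>j\<in>I. c j * integral\<^sup>L (Ms j) v) = 0" using mult by blast
      then have "c0 * (\<Sum>j\<in>I. c j * integral\<^sup>L (Ms j) v) = 0" by simp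
      then show ?thesis by (simp add: sum_distrib_left algebra_simps)
    qed
  qed
next
  case (add v w)
  show ?case
  proof
    assume int: "\<forall>j\<in>I. integrable (Ms j) (\<lambda>x. w x + v x)"
    have iv: "integrable (Ms j) v" and iw: "integrable (Ms j) w" if "j \<in> I" for j
    proof -
      have i: "integrable (Ms j) (\<lambda>x. w x + v x)" using int that by auto
      show "integrable (Ms j) v"
        by (rule Bochner_Integration.integrable_bound[OF i]) (use add meas_PS[OF ss[OF that]] in \<open>auto intro!: AE_I2\<close>)
      show "integrable (Ms j) w"
        by (rule Bochner_Integration.integrable_bound[OF i]) (use add meas_PS[OF ss[OF that]] in \<open>auto intro!: AE_I2\<close>)
    qed
    have "(\<Sum>j\<in>I. c j * integral\<^sup>L (Ms j) (\<lambda>x. w x + v x))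
        = (\<Sum>j\<in>I. c j * integral\<^sup>L (Ms j) w) + (\<Sum>j\<in>I. c j * integral\<^sup>L (Ms j) v)"
      using iv iw by (simp add: sum.distrib[symmetric] algebra_simps cong: sum.cong)
    also have "\<dots> = 0" using add iv iw by simp
    finally show "(\<Sum>j\<in>I. c j * integral\<^sup>L (Ms j) (\<lambda>x. w x + v x)) = 0" .
  qed
next
  case (seq U)
  show ?case
  proof
    assume int: "\<forall>j\<in>I. integrable (Ms j) u"
    have le: "U i x \<le> u x" if "x \<in> prob_simplex" for i x
    proof -
      have "incseq (\<lambda>i. U i x)" using seq.hyps(3) by (auto simp: incseq_def le_fun_def)
      then show ?thesis using incseq_le seq.hyps(4) that space_PS by metis
    qed
    have iU: "integrable (Ms j) (U i)" if "j \<in> I" for i j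
    proof -
      have i: "integrable (Ms j) u" using int that by auto
      show ?thesis
      proof (rule Bochner_Integration.integrable_bound[OF i meas_PS[OF ss[OF that] seq.hyps(1)]], rule AE_I2)
        fix x assume x: "x \<in> space (Ms j)"
        have spj: "space (Ms j) = prob_simplex" using sets_eq_imp_space_eq[OF ss[OF that]] space_PS by simp
        show "norm (U i x) \<le> norm (u x)" using le[of x i] seq.hyps(2)[of i x] u(2)[of x] spj x by simp
      qed
    qed
    have lim: "(\<lambda>i. integral\<^sup>L (Ms j) (U i)) \<longlonglongrightarrow> integral\<^sup>L (Ms j) u" if "j \<in> I" for j
    proof (rule integral_dominated_convergence[where w=u])
      show "u \<in> borel_measurable (Ms j)" "\<And>i. U i \<in> borel_measurable (Ms j)"
        using meas_PS[OF ss[OF that]] u seq.hyps(1) by auto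
      show "integrable (Ms j) u" using int that by auto
      show "AE x in Ms j. (\<lambda>i. U i x) \<longlonglongrightarrow> u x"
        using seq.hyps(4) sets_eq_imp_space_eq[OF ss[OF that]] space_PS by (auto intro!: AE_I2)
      show "AE x in Ms j. norm (U i x) \<le> u x" for i
      proof (rule AE_I2)
        fix x assume x: "x \<in> space (Ms j)"
        have spj: "space (Ms j) = prob_simplex" using sets_eq_imp_space_eq[OF ss[OF that]] space_PS by simp
        show "norm (U i x) \<le> u x" using le[of x i] seq.hyps(2)[of i x] spj x by simp
      qed
    qed
    have "(\<lambda>i. \<Sum>j\<in>I. c j * integral\<^sup>L (Ms j) (U i)) \<longlonglongrightarrow> (\<Sum>j\<in>I. c j * integral\<^sup>L (Ms j) u)"
      using lim by (intro tendsto_sum tendsto_mult_left) auto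
    moreover have "(\<lambda>i. \<Sum>j\<in>I. c j * integral\<^sup>L (Ms j) (U i)) = (\<lambda>i. 0)"
    proof
      fix i show "(\<Sum>j\<in>I. c j * integral\<^sup>L (Ms j) (U i)) = 0"
        using seq.IH[of i] iU[of _ i] by blast
    qed
    ultimately have "(\<lambda>i. 0) \<longlonglongrightarrow> (\<Sum>j\<in>I. c j * integral\<^sup>L (Ms j) u)" by simp
    then show "(\<Sum>j\<in>I. c j * integral\<^sup>L (Ms j) u) = 0"
      using LIMSEQ_unique[OF _ tendsto_const] by metis
  qed
qed

lemma int_comb:
  fixes Ms :: "'i \<Rightarrow> (real^'n::finite) measure" and c :: "'i \<Rightarrow> real"
  assumes fm: "\<And>j. j \<in> I \<Longrightarrow> finite_measure (Ms j)"
    and ss: "\<And>j. j \<in> I \<Longrightarrow> sets (Ms j) = sets PS"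
    and eq: "\<And>A. A \<in> sets PS \<Longrightarrow> (\<Sum>j\<in>I. c j * measure (Ms j) A) = 0"
    and f: "f \<in> borel_measurable PS" and bnd: "\<And>z. z \<in> prob_simplex \<Longrightarrow> \<bar>f z\<bar> \<le> K"
  shows "(\<Sum>j\<in>I. c j * integral\<^sup>L (Ms j) f) = 0"
proof -
  define u where "u z = indicator prob_simplex z * (f z + \<bar>K\<bar>)" for z
  have sp: "space (Ms j) = prob_simplex" if "j \<in> I" for j
    using sets_eq_imp_space_eq[OF ss[OF that]] space_PS by simp
  have um: "u \<in> borel_measurable PS" unfolding u_def using f Omega_PS by measurable
  have u0: "0 \<le> u x" for x unfolding u_def indicator_def
    using bnd[of x] by auto
  have intf: "integrable (Ms j) f" if "j \<in> I" for j
    using finite_measure.integrable_const_bound[OF fm[OF that], of f K] bnd sp[OF that]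
      meas_PS[OF ss[OF that] f] by (auto intro!: AE_I2)
  have intu: "integrable (Ms j) u" if "j \<in> I" for j
  proof -
    have "integrable (Ms j) (\<lambda>z. f z + \<bar>K\<bar>)"
      by (intro Bochner_Integration.integrable_add intf[OF that] finite_measure.integrable_const[OF fm[OF that]])
    moreover have "integrable (Ms j) u \<longleftrightarrow> integrable (Ms j) (\<lambda>z. f z + \<bar>K\<bar>)"
      by (rule Bochner_Integration.integrable_cong) (auto simp: u_def sp[OF that])
    ultimately show ?thesis by simp
  qed
  have iu: "integral\<^sup>L (Ms j) u = integral\<^sup>L (Ms j) f + \<bar>K\<bar> * measure (Ms j) prob_simplex" if "j \<in> I" for j
  proof -
    have "integral\<^sup>L (Ms j) u = integral\<^sup>L (Ms j) (\<lambda>z. f z + \<bar>K\<bar>)"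
      using sp[OF that] by (intro Bochner_Integration.integral_cong) (auto simp: u_def)
    also have "\<dots> = integral\<^sup>L (Ms j) f + \<bar>K\<bar> * measure (Ms j) prob_simplex"
      by (simp add: Bochner_Integration.integral_add[OF intf[OF that] finite_measure.integrable_const[OF fm[OF that]]] sp[OF that] mult.commute)
    finally show ?thesis .
  qed
  have "(\<Sum>j\<in>I. c j * integral\<^sup>L (Ms j) u) = 0"
    using int_comb_nonneg[OF ss eq um u0] intu by blast
  also have "(\<Sum>j\<in>I. c j * integral\<^sup>L (Ms j) u)
     = (\<Sum>j\<in>I. c j * integral\<^sup>L (Ms j) f) + \<bar>K\<bar> * (\<Sum>j\<in>I. c j * measure (Ms j) prob_simplex)"
    using iu by (simp add: algebra_simps sum.distrib sum_distrib_left cong: sum.cong)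
  finally show ?thesis using eq[OF Omega_PS] by simp
qed




lemma sm_lin:
  assumes "\<mu> \<in> signed_measures" "\<nu> \<in> signed_measures"
  shows "(\<lambda>A. a * \<mu> A + b * \<nu> A) \<in> signed_measures"
  using assms unfolding signed_measures_def by (auto intro!: sums_add sums_mult)

lemma jp_integrable:
  fixes \<mu> :: "(real^'n::finite) set \<Rightarrow> real" and f :: "real^'n \<Rightarrow> real"
  assumes sm: "\<mu> \<in> signed_measures" and f: "f \<in> borel_measurable PS"
    and b: "\<And>z. z \<in> prob_simplex \<Longrightarrow> \<bar>f z\<bar> \<le> K"
  shows "integrable (jordan_pos \<mu>) f"
proof -
  have "AE x in jordan_pos \<mu>. norm (f x) \<le> K" by (rule AE_I2) (use b in simp)
  then show ?thesis using finite_measure.integrable_const_bound[OF jp_finite[OF sm], of f K]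
    meas_PS[OF jp_sets f] by blast
qed

lemma si_eq: "signed_integral \<mu> f = integral\<^sup>L (jordan_pos \<mu>) f - integral\<^sup>L (jordan_pos (\<lambda>A. - \<mu> A)) f"
  by (simp add: signed_integral_def jordan_neg_def)

lemma si_lin:
  fixes \<mu> \<nu> :: "(real^'n::finite) set \<Rightarrow> real"
  assumes sm: "\<mu> \<in> signed_measures" "\<nu> \<in> signed_measures"
    and f: "f \<in> borel_measurable PS" and b: "\<And>z. z \<in> prob_simplex \<Longrightarrow> \<bar>f z\<bar> \<le> K"
  shows "signed_integral (\<lambda>A. a * \<mu> A + b * \<nu> A) f = a * signed_integral \<mu> f + b * signed_integral \<nu> f"
proof -
  define l where "l = (\<lambda>A. a * \<mu> A + b * \<nu> A)"
  have sl: "l \<in> signed_measures" unfolding l_def by (rule sm_lin[OF sm])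
  define Ms where "Ms = [jordan_pos l, jordan_pos (\<lambda>A. - l A), jordan_pos \<mu>, jordan_pos (\<lambda>A. - \<mu> A),
     jordan_pos \<nu>, jordan_pos (\<lambda>A. - \<nu> A)]"
  define c :: "real list" where "c = [1, -1, -a, a, -b, b]"
  have small: "\<And>j. j < 6 \<Longrightarrow> \<exists>\<rho>\<in>signed_measures. Ms ! j = jordan_pos \<rho>"
  proof -
    fix j :: nat assume "j < 6"
    then have "j \<in> {0,1,2,3,4,5}" by auto
    then show "\<exists>\<rho>\<in>signed_measures. Ms ! j = jordan_pos \<rho>"
      using sl sm sm_uminus[OF sl] sm_uminus[OF sm(1)] sm_uminus[OF sm(2)] by (auto simp: Ms_def)
  qed
  have "(\<Sum>j\<in>{..<6}. (c ! j) * integral\<^sup>L (Ms ! j) f) = 0"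
  proof (rule int_comb[OF _ _ _ f b])
    show "finite_measure (Ms ! j)" if "j \<in> {..<6}" for j
      using small[of j] that jp_finite by auto
    show "sets (Ms ! j) = sets PS" if "j \<in> {..<6}" for j
      using small[of j] that by auto
    fix A :: "(real^'n) set" assume A: "A \<in> sets PS"
    show "(\<Sum>j\<in>{..<6}. c ! j * measure (Ms ! j) A) = 0"
    proof -
      have "(\<Sum>j\<in>{..<6}. c ! j * measure (Ms ! j) A)
        = (pos l A - pos (\<lambda>A. - l A) A) - a * (pos \<mu> A - pos (\<lambda>A. - \<mu> A) A)
          - b * (pos \<nu> A - pos (\<lambda>A. - \<nu> A) A)"
        using jp_measure[OF sl A] jp_measure[OF sm_uminus[OF sl] A] jp_measure[OF sm(1) A]
          jp_measure[OF sm_uminus[OF sm(1)] A] jp_measure[OF sm(2) A] jp_measure[OF sm_uminus[OF sm(2)] A]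
        by (simp add: lessThan_Suc eval_nat_numeral Ms_def c_def algebra_simps)
      also have "\<dots> = l A - a * \<mu> A - b * \<nu> A"
        using pos_decomp[OF sl A] pos_decomp[OF sm(1) A] pos_decomp[OF sm(2) A] by simp
      also have "\<dots> = 0" by (simp add: l_def)
      finally show ?thesis .
    qed
  qed
  moreover have "(\<Sum>j\<in>{..<6}. (c ! j) * integral\<^sup>L (Ms ! j) f)
     = signed_integral l f - a * signed_integral \<mu> f - b * signed_integral \<nu> f"
    by (simp add: lessThan_Suc eval_nat_numeral Ms_def c_def si_eq algebra_simps)
  ultimately show ?thesis by (simp add: l_def)
qed

lemma si_sum:
  assumes sm: "\<mu> \<in> signed_measures" and I: "finite I"
    and f: "\<And>i. i \<in> I \<Longrightarrow> f i \<in> borel_measurable PS"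
    and b: "\<And>i z. i \<in> I \<Longrightarrow> z \<in> prob_simplex \<Longrightarrow> \<bar>f i z\<bar> \<le> K"
  shows "signed_integral \<mu> (\<lambda>z. \<Sum>i\<in>I. f i z) = (\<Sum>i\<in>I. signed_integral \<mu> (f i))"
proof -
  have i1: "integrable (jordan_pos \<mu>) (f i)" if "i \<in> I" for i
    using jp_integrable[OF sm f b] that by blast
  have i2: "integrable (jordan_pos (\<lambda>A. - \<mu> A)) (f i)" if "i \<in> I" for i
    using jp_integrable[OF sm_uminus[OF sm] f b] that by blast
  show ?thesis unfolding si_eq
    by (simp add: Bochner_Integration.integral_sum[OF i1] Bochner_Integration.integral_sum[OF i2] sum_subtractf)
qed

lemma pos_neg_abs:
  assumes sm: "\<mu> \<in> signed_measures" and A: "A \<in> sets PS"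
  shows "\<bar>\<mu> A\<bar> \<le> pos \<mu> A + pos (\<lambda>A. - \<mu> A) A"
  using pos_upper[OF sm A order_refl] pos_upper[OF sm_uminus[OF sm] A order_refl]
    pos_nonneg[OF sm, of A] pos_nonneg[OF sm_uminus[OF sm], of A] by linarith

lemma pos_finite_additive:
  assumes sm: "\<mu> \<in> signed_measures" and E: "\<And>i. i < (k::nat) \<Longrightarrow> E i \<in> sets PS"
    and d: "disjoint_family_on E {..<k}"
  shows "(\<Sum>i<k. pos \<mu> (E i)) = pos \<mu> (\<Union>i<k. E i)"
proof -
  have "measure (jordan_pos \<mu>) (\<Union>i\<in>{..<k}. E i) = (\<Sum>i\<in>{..<k}. measure (jordan_pos \<mu>) (E i))"
    using E d finite_measure.emeasure_finite[OF jp_finite[OF sm]]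
    by (intro measure_finite_Union) auto
  moreover have "(\<Union>i<k. E i) \<in> sets PS" using E by auto
  ultimately show ?thesis using E by (simp add: jp_measure[OF sm])
qed

lemma partition_bound:
  assumes sm: "\<mu> \<in> signed_measures" and E: "\<And>i. i < (k::nat) \<Longrightarrow> E i \<in> sets PS"
    and d: "disjoint_family_on E {..<k}" and u: "(\<Union>i<k. E i) = prob_simplex"
  shows "(\<Sum>i<k. \<bar>\<mu> (E i)\<bar>) \<le> pos \<mu> prob_simplex + pos (\<lambda>A. - \<mu> A) prob_simplex"
proof -
  have "(\<Sum>i<k. \<bar>\<mu> (E i)\<bar>) \<le> (\<Sum>i<k. pos \<mu> (E i) + pos (\<lambda>A. - \<mu> A) (E i))"
    using pos_neg_abs[OF sm E] by (intro sum_mono) auto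
  also have "\<dots> = pos \<mu> prob_simplex + pos (\<lambda>A. - \<mu> A) prob_simplex"
    using pos_finite_additive[OF sm E d] pos_finite_additive[OF sm_uminus[OF sm] E d] u
    by (simp add: sum.distrib)
  finally show ?thesis .
qed

abbreviation parts where
  "parts \<mu> \<equiv> {(\<Sum>i<k. \<bar>\<mu> (E i)\<bar>) | (k::nat) E. (\<forall>i<k. E i \<in> sets PS) \<and>
       disjoint_family_on E {..<k} \<and> (\<Union>i<k. E i) = prob_simplex}"

lemma parts_memI: "(\<forall>i<(k::nat). E i \<in> sets PS) \<Longrightarrow> disjoint_family_on E {..<k} \<Longrightarrow>
  (\<Union>i<k. E i) = prob_simplex \<Longrightarrow> (\<Sum>i<k. \<bar>\<mu> (E i)\<bar>) \<in> parts \<mu>"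
  by blast

lemma tv_norm_parts: "tv_norm \<mu> = Sup (parts \<mu>)"
  by (simp add: tv_norm_def)

lemma parts_Omega: "\<bar>\<mu> prob_simplex\<bar> \<in> parts \<mu>"
proof -
  have "(\<Sum>i<(1::nat). \<bar>\<mu> ((\<lambda>_. prob_simplex) i)\<bar>) \<in> parts \<mu>"
    by (rule parts_memI) (auto simp: disjoint_family_on_def Omega_PS)
  then show ?thesis by simp
qed

lemma parts_ne: "parts \<mu> \<noteq> {}"
proof
  assume e: "parts \<mu> = {}"
  have "\<bar>\<mu> prob_simplex\<bar> \<in> parts \<mu>" by (rule parts_Omega)
  then show False unfolding e by simp
qed

lemma tv_upper_gen:
  assumes "\<And>(k::nat) E. (\<forall>i<k. E i \<in> sets PS) \<Longrightarrow> disjoint_family_on E {..<k} \<Longrightarrow> (\<Union>i<k. E i) = prob_simplex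
     \<Longrightarrow> (\<Sum>i<k. \<bar>\<mu> (E i)\<bar>) \<le> X"
  shows "tv_norm \<mu> \<le> X" "bdd_above (parts \<mu>)"
proof -
  have b: "x \<le> X" if "x \<in> parts \<mu>" for x
  proof -
    from that obtain k :: nat and E where "x = (\<Sum>i<k. \<bar>\<mu> (E i)\<bar>)" "\<forall>i<k. E i \<in> sets PS"
      "disjoint_family_on E {..<k}" "(\<Union>i<k. E i) = prob_simplex" by auto
    then show ?thesis using assms by simp
  qed
  show "tv_norm \<mu> \<le> X" unfolding tv_norm_parts
    by (rule cSup_least[OF parts_ne]) (rule b)
  show "bdd_above (parts \<mu>)" using b by (intro bdd_aboveI)
qed

lemma tv_upper:
  assumes sm: "\<mu> \<in> signed_measures"
  shows "tv_norm \<mu> \<le> pos \<mu> prob_simplex + pos (\<lambda>A. - \<mu> A) prob_simplex" "bdd_above (parts \<mu>)"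
proof -
  have *: "(\<Sum>i<k. \<bar>\<mu> (E i)\<bar>) \<le> pos \<mu> prob_simplex + pos (\<lambda>A. - \<mu> A) prob_simplex"
    if "\<forall>i<k. E i \<in> sets PS" "disjoint_family_on E {..<k}" "(\<Union>i<k. E i) = prob_simplex" for k :: nat and E
    using partition_bound[OF sm, of k E] that by simp
  show "tv_norm \<mu> \<le> pos \<mu> prob_simplex + pos (\<lambda>A. - \<mu> A) prob_simplex" "bdd_above (parts \<mu>)"
    by (rule tv_upper_gen, rule *, assumption+)+
qed

lemma tv_lower:
  fixes \<mu> :: "(real^'n::finite) set \<Rightarrow> real"
  assumes sm: "\<mu> \<in> signed_measures"
  shows "pos \<mu> prob_simplex + pos (\<lambda>A. - \<mu> A) prob_simplex \<le> tv_norm \<mu>"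
proof -
  have key: "\<mu> C - \<mu> D \<le> tv_norm \<mu>" if C: "C \<in> sets PS" "C \<subseteq> prob_simplex"
    and D: "D \<in> sets PS" "D \<subseteq> prob_simplex" for C D
  proof -
    define E where "E i = (if i = (0::nat) then C - D else if i = 1 then D - C
       else prob_simplex - (C - D) - (D - C))" for i
    have E: "\<forall>i<3. E i \<in> sets PS" using C D Omega_PS by (auto simp: E_def)
    have d: "disjoint_family_on E {..<3}" by (auto simp: disjoint_family_on_def E_def)
    have u: "(\<Union>i<3. E i) = prob_simplex" using C D by (auto simp: E_def eval_nat_numeral lessThan_Suc)
    have mem: "(\<Sum>i<3. \<bar>\<mu> (E i)\<bar>) \<in> parts \<mu>" using E d u by (rule parts_memI)
    have "\<mu> C = \<mu> (C - D) + \<mu> (C \<inter> D)"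
      using sm_add[OF sm, of "C - D" "C \<inter> D"] C D Un_Diff_Int[of C D] by auto
    moreover have "\<mu> D = \<mu> (D - C) + \<mu> (C \<inter> D)"
      using sm_add[OF sm, of "D - C" "C \<inter> D"] C D Un_Diff_Int[of D C] by (auto simp: Int_commute)
    ultimately have "\<mu> C - \<mu> D \<le> (\<Sum>i<3. \<bar>\<mu> (E i)\<bar>)"
      by (simp add: eval_nat_numeral lessThan_Suc E_def)
    also have "\<dots> \<le> tv_norm \<mu>" unfolding tv_norm_parts
      by (rule cSup_upper[OF mem tv_upper(2)[OF sm]])
    finally show ?thesis .
  qed
  have "pos \<mu> prob_simplex \<le> tv_norm \<mu> - (- \<mu> D)" if D: "D \<in> sets PS" "D \<subseteq> prob_simplex" for D
  proof (rule pos_least)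
    fix C :: "(real^'n) set" assume "C \<in> sets PS" "C \<subseteq> prob_simplex"
    then show "\<mu> C \<le> tv_norm \<mu> - (- \<mu> D)" using key[of C D] D by simp
  qed
  then have "pos (\<lambda>A. - \<mu> A) prob_simplex \<le> tv_norm \<mu> - pos \<mu> prob_simplex"
    by (intro pos_least) (auto simp: algebra_simps)
  then show ?thesis by simp
qed



lemma rupd_comp: "rupd T M i y z $ k = (\<Sum>j\<in>UNIV. M i $ k $ y * T $ j $ k * z $ j) / alpha T M i y z"
  unfolding rupd_def by (simp add: axis_def if_distrib cong: if_cong)

lemma alpha_nonneg:
  assumes "stochastic T" "stochastic (M i)" "z \<in> prob_simplex"
  shows "0 \<le> alpha T M i y z"
  using assms unfolding alpha_def stochastic_def prob_simplex_def
  by (intro sum_nonneg mult_nonneg_nonneg) auto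

lemma alpha_sum:
  assumes "stochastic T" "stochastic (M i)" "z \<in> prob_simplex"
  shows "(\<Sum>y\<in>UNIV. alpha T M i y z) = 1"
proof -
  have "(\<Sum>y\<in>UNIV. alpha T M i y z) = (\<Sum>x\<in>UNIV. (\<Sum>j\<in>UNIV. z $ j * T $ j $ x) * (\<Sum>y\<in>UNIV. M i $ x $ y))"
    unfolding alpha_def by (subst sum.swap) (simp add: sum_distrib_left)
  also have "\<dots> = (\<Sum>x\<in>UNIV. (\<Sum>j\<in>UNIV. z $ j * T $ j $ x))"
    using assms(2) by (simp add: stochastic_def)
  also have "\<dots> = (\<Sum>j\<in>UNIV. z $ j * (\<Sum>x\<in>UNIV. T $ j $ x))"
    by (subst sum.swap) (simp add: sum_distrib_left)
  also have "\<dots> = 1" using assms(1,3) by (simp add: stochastic_def prob_simplex_def)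
  finally show ?thesis .
qed

lemma rupd_simplex:
  assumes "stochastic T" "stochastic (M i)" "z \<in> prob_simplex" "0 < alpha T M i y z"
  shows "rupd T M i y z \<in> prob_simplex"
proof -
  have nn: "0 \<le> rupd T M i y z $ k" for k
    unfolding rupd_comp using assms unfolding stochastic_def prob_simplex_def
    by (intro divide_nonneg_pos sum_nonneg mult_nonneg_nonneg) auto
  have "(\<Sum>k\<in>UNIV. rupd T M i y z $ k) = (\<Sum>k\<in>UNIV. \<Sum>j\<in>UNIV. M i $ k $ y * T $ j $ k * z $ j) / alpha T M i y z"
    unfolding rupd_comp by (simp add: sum_divide_distrib)
  also have "(\<Sum>k\<in>UNIV. \<Sum>j\<in>UNIV. M i $ k $ y * T $ j $ k * z $ j) = alpha T M i y z"
    unfolding alpha_def by (rule sum.cong[OF refl]) (simp add: sum_distrib_left mult_ac)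
  finally show ?thesis using nn assms(4) by (simp add: prob_simplex_def)
qed

definition wgt where
  "wgt T M g i y z = (if g z = i \<and> 0 < alpha T M i y z then alpha T M i y z else 0)"

definition Kk where
  "Kk T M g B z = (\<Sum>i\<in>UNIV. \<Sum>y\<in>UNIV. wgt T M g i y z * indicator B (rupd T M i y z))"

lemma indicator_sums:
  assumes "disjoint_family E"
  shows "(\<lambda>l. indicator (E l) x :: real) sums indicator (\<Union>l. E l) x"
proof (cases "\<exists>l. x \<in> E l")
  case True
  then obtain l0 where l0: "x \<in> E l0" by blast
  have "(\<lambda>l. indicator (E l) x :: real) = (\<lambda>l. if l = l0 then 1 else 0)"
    using assms l0 by (auto simp: fun_eq_iff indicator_def disjoint_family_on_def)
  moreover have "(\<lambda>l. if l = l0 then 1 else 0 :: real) sums 1" using sums_single[of l0 "\<lambda>_. 1::real"] by simp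
  moreover have "indicator (\<Union>l. E l) x = (1::real)" using l0 by (auto simp: indicator_def)
  ultimately show ?thesis by simp
next
  case False then show ?thesis by (simp add: indicator_def)
qed

lemma wgt_nonneg: "0 \<le> wgt T M g i y z"
  by (simp add: wgt_def)

lemma si_sum':
  assumes sm: "\<mu> \<in> signed_measures"
    and f: "\<And>i. f i \<in> borel_measurable PS"
    and b: "\<And>i z. z \<in> prob_simplex \<Longrightarrow> \<bar>f i z\<bar> \<le> K" and I: "finite I"
  shows "signed_integral \<mu> (\<lambda>z. \<Sum>i\<in>I. f i z) = (\<Sum>i\<in>I. signed_integral \<mu> (f i))"
  using si_sum[OF sm I, of f K] f b by blast

context
  fixes T :: "real^'n::finite^'n" and M :: "'o::finite \<Rightarrow> real^'m::finite^'n" and g :: "real^'n \<Rightarrow> 'o"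
  assumes sT: "stochastic T" and sM: "\<And>i. stochastic (M i)" and gm: "g \<in> measurable PS (count_space UNIV)"
begin

lemma wgt_alt: "z \<in> prob_simplex \<Longrightarrow> wgt T M g i y z = (if i = g z then alpha T M i y z else 0)"
  using alpha_nonneg[where M=M and i=i and y=y, OF sT sM, of z] by (auto simp: wgt_def)

lemma wgt_sum: "z \<in> prob_simplex \<Longrightarrow> (\<Sum>i\<in>UNIV. \<Sum>y\<in>UNIV. wgt T M g i y z) = 1"
proof -
  assume z: "z \<in> prob_simplex"
  have "(\<Sum>i\<in>UNIV. \<Sum>y\<in>UNIV. wgt T M g i y z) = (\<Sum>i\<in>UNIV. if i = g z then (\<Sum>y\<in>UNIV. alpha T M i y z) else 0)"
    by (rule sum.cong) (auto simp: wgt_alt[OF z])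
  also have "\<dots> = (\<Sum>y\<in>UNIV. alpha T M (g z) y z)" by simp
  also have "\<dots> = 1" by (rule alpha_sum[where M=M and i="g z", OF sT sM z])
  finally show ?thesis .
qed

lemma wgt_le1: "z \<in> prob_simplex \<Longrightarrow> wgt T M g i y z \<le> 1"
proof -
  assume z: "z \<in> prob_simplex"
  have "wgt T M g i y z \<le> (\<Sum>y\<in>UNIV. wgt T M g i y z)"
    by (rule member_le_sum) (auto simp: wgt_nonneg)
  also have "\<dots> \<le> (\<Sum>i\<in>UNIV. \<Sum>y\<in>UNIV. wgt T M g i y z)"
    by (rule member_le_sum) (auto intro: sum_nonneg simp: wgt_nonneg)
  finally show ?thesis using wgt_sum[OF z] by simp
qed

lemma Kk_nonneg: "0 \<le> Kk T M g B z"
  unfolding Kk_def by (intro sum_nonneg mult_nonneg_nonneg wgt_nonneg) auto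

lemma Kk_le1: "z \<in> prob_simplex \<Longrightarrow> Kk T M g B z \<le> 1"
proof -
  assume z: "z \<in> prob_simplex"
  have "Kk T M g B z \<le> (\<Sum>i\<in>UNIV. \<Sum>y\<in>UNIV. wgt T M g i y z)"
    unfolding Kk_def by (intro sum_mono mult_right_le_one_le wgt_nonneg) (auto simp: indicator_def)
  then show ?thesis using wgt_sum[OF z] by simp
qed

lemma Kk_Omega: "z \<in> prob_simplex \<Longrightarrow> Kk T M g prob_simplex z = 1"
proof -
  assume z: "z \<in> prob_simplex"
  have eq: "wgt T M g i y z * indicator prob_simplex (rupd T M i y z) = wgt T M g i y z" for i y
    using rupd_simplex[where M=M and i=i and y=y, OF sT sM z] by (auto simp: wgt_def)
  show ?thesis unfolding Kk_def eq by (rule wgt_sum[OF z])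
qed

lemma alpha_PS[measurable]: "(\<lambda>z. alpha T M i y z) \<in> borel_measurable PS"
  unfolding PS_def by (rule measurable_restrict_space1) (unfold alpha_def, measurable)

lemma rupd_PS[measurable]: "(\<lambda>z. rupd T M i y z) \<in> borel_measurable PS"
  unfolding PS_def by (rule measurable_restrict_space1) (unfold rupd_def alpha_def, measurable)

lemma Omega_borel: "(prob_simplex :: (real^'n) set) \<in> sets borel"
  unfolding prob_simplex_def by measurable

lemma sets_PS_borel: "B \<in> sets PS \<Longrightarrow> (B :: (real^'n) set) \<in> sets borel"
  unfolding PS_def using Omega_borel by (auto simp: sets_restrict_space_iff)

lemma g_pred[measurable]: "{z \<in> space PS. g z = i} \<in> sets PS"
  using gm by measurable

lemma h_meas: "B \<in> sets PS \<Longrightarrow> (\<lambda>z. wgt T M g i y z * indicator B (rupd T M i y z)) \<in> borel_measurable PS"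
proof -
  assume B: "B \<in> sets PS"
  note [measurable] = sets_PS_borel[OF B] gm
  show ?thesis unfolding wgt_def by measurable
qed

lemma Kk_meas: "B \<in> sets PS \<Longrightarrow> Kk T M g B \<in> borel_measurable PS"
  unfolding Kk_def using h_meas by (intro borel_measurable_sum) auto


lemma Kk_bound: "z \<in> prob_simplex \<Longrightarrow> \<bar>Kk T M g B z\<bar> \<le> 1"
  using Kk_nonneg[of B z] Kk_le1[of z B] by simp

lemma Kk_fin_add:
  assumes d: "disjoint_family_on E {..<(k::nat)}"
  shows "(\<Sum>l<k. Kk T M g (E l) z) = Kk T M g (\<Union>l<k. E l) z"
proof -
  let ?f = "\<lambda>i y l. wgt T M g i y z * indicator (E l) (rupd T M i y z)"
  have "(\<Sum>l<k. Kk T M g (E l) z) = (\<Sum>l<k. \<Sum>i\<in>UNIV. \<Sum>y\<in>UNIV. ?f i y l)"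
    unfolding Kk_def ..
  also have "\<dots> = (\<Sum>i\<in>UNIV. \<Sum>l<k. \<Sum>y\<in>UNIV. ?f i y l)" by (rule sum.swap)
  also have "\<dots> = (\<Sum>i\<in>UNIV. \<Sum>y\<in>UNIV. \<Sum>l<k. ?f i y l)" by (rule sum.cong[OF refl], rule sum.swap)
  also have "\<dots> = Kk T M g (\<Union>l<k. E l) z"
    unfolding Kk_def by (simp only: indicator_UN_disjoint[OF finite_lessThan d] sum_distrib_left)
  finally show ?thesis .
qed

lemma Kk_sums:
  assumes d: "disjoint_family E"
  shows "(\<lambda>l. Kk T M g (E l) z) sums Kk T M g (\<Union>l. E l) z"
  unfolding Kk_def by (intro sums_sum sums_mult indicator_sums d)

lemma Kk_int: "\<rho> \<in> signed_measures \<Longrightarrow> B \<in> sets PS \<Longrightarrow> integrable (jordan_pos \<rho>) (Kk T M g B)"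
  by (rule jp_integrable[OF _ Kk_meas Kk_bound])

lemma h_bound: "z \<in> prob_simplex \<Longrightarrow> \<bar>wgt T M g i y z * indicator B (rupd T M i y z)\<bar> \<le> 1"
  using wgt_le1[of z i y] wgt_nonneg[of T M g i y z] by (auto simp: indicator_def)

lemma tF_eq:
  assumes sm: "\<mu> \<in> signed_measures" and B: "B \<in> sets PS"
  shows "transF T M g \<mu> B = signed_integral \<mu> (Kk T M g B)"
proof -
  let ?h = "\<lambda>i y z. wgt T M g i y z * indicator B (rupd T M i y z)"
  have h: "(\<lambda>z. if g z = i \<and> alpha T M i y z > 0 then alpha T M i y z * indicator B (rupd T M i y z) else 0)
     = ?h i y" for i y by (auto simp: wgt_def fun_eq_iff)
  have hb: "\<bar>\<Sum>y\<in>UNIV. ?h i y z\<bar> \<le> real (card (UNIV :: 'm set))" if z: "z \<in> prob_simplex" for i z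
  proof -
    have "\<bar>\<Sum>y\<in>UNIV. ?h i y z\<bar> \<le> (\<Sum>y\<in>(UNIV :: 'm set). \<bar>?h i y z\<bar>)" by (rule sum_abs)
    also have "\<dots> \<le> (\<Sum>y\<in>(UNIV :: 'm set). 1)" by (rule sum_mono) (rule h_bound[OF z])
    finally show ?thesis by simp
  qed
  have fo: "finite (UNIV :: 'o set)" by simp
  have fm: "finite (UNIV :: 'm set)" by simp
  have m1: "(\<lambda>z. \<Sum>y\<in>UNIV. ?h i y z) \<in> borel_measurable PS" for i
    by (rule borel_measurable_sum, rule h_meas[OF B])
  have "signed_integral \<mu> (Kk T M g B) = signed_integral \<mu> (\<lambda>z. \<Sum>i\<in>UNIV. \<Sum>y\<in>UNIV. ?h i y z)"
    unfolding Kk_def ..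
  also have "\<dots> = (\<Sum>i\<in>UNIV. signed_integral \<mu> (\<lambda>z. \<Sum>y\<in>UNIV. ?h i y z))"
    by (rule si_sum'[OF sm m1 hb fo])
  also have "\<dots> = (\<Sum>i\<in>UNIV. \<Sum>y\<in>UNIV. signed_integral \<mu> (?h i y))"
  proof (rule sum.cong[OF refl])
    fix i :: 'o
    show "signed_integral \<mu> (\<lambda>z. \<Sum>y\<in>UNIV. ?h i y z) = (\<Sum>y\<in>UNIV. signed_integral \<mu> (?h i y))"
      by (rule si_sum'[OF sm h_meas[OF B] h_bound fm])
  qed
  finally show ?thesis unfolding transF_def h using B by simp
qed

lemma int_Kk_sums:
  assumes sm: "\<rho> \<in> signed_measures" and E: "range E \<subseteq> sets PS" and d: "disjoint_family E"
  shows "(\<lambda>l. integral\<^sup>L (jordan_pos \<rho>) (Kk T M g (E l))) sums integral\<^sup>L (jordan_pos \<rho>) (Kk T M g (\<Union>l. E l))"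
proof -
  have EU: "(\<Union>l. E l) \<in> sets PS" using E by auto
  have El: "E l \<in> sets PS" for l using E by auto
  have "(\<lambda>N. integral\<^sup>L (jordan_pos \<rho>) (\<lambda>z. \<Sum>l<N. Kk T M g (E l) z)) \<longlonglongrightarrow> integral\<^sup>L (jordan_pos \<rho>) (Kk T M g (\<Union>l. E l))"
  proof (rule integral_dominated_convergence[where w="\<lambda>_. 1"])
    show "Kk T M g (\<Union>l. E l) \<in> borel_measurable (jordan_pos \<rho>)"
      using meas_PS[OF jp_sets Kk_meas[OF EU]] .
    show "(\<lambda>z. \<Sum>l<N. Kk T M g (E l) z) \<in> borel_measurable (jordan_pos \<rho>)" for N
      using meas_PS[OF jp_sets Kk_meas[OF El]] by (intro borel_measurable_sum) auto
    show "integrable (jordan_pos \<rho>) (\<lambda>_. 1::real)"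
      using finite_measure.integrable_const[OF jp_finite[OF sm]] .
    show "AE z in jordan_pos \<rho>. (\<lambda>N. \<Sum>l<N. Kk T M g (E l) z) \<longlonglongrightarrow> Kk T M g (\<Union>l. E l) z"
      using Kk_sums[OF d] by (auto simp: sums_def)
    show "AE z in jordan_pos \<rho>. norm (\<Sum>l<N. Kk T M g (E l) z) \<le> 1" for N
    proof (rule AE_I2)
      fix z assume z: "z \<in> space (jordan_pos \<rho>)"
      have "disjoint_family_on E {..<N}" using d by (rule disjoint_family_on_mono[rotated]) auto
      then have "(\<Sum>l<N. Kk T M g (E l) z) = Kk T M g (\<Union>l<N. E l) z" by (rule Kk_fin_add)
      then show "norm (\<Sum>l<N. Kk T M g (E l) z) \<le> 1" using Kk_bound[of z] z by simp
    qed
  qed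
  moreover have "integral\<^sup>L (jordan_pos \<rho>) (\<lambda>z. \<Sum>l<N. Kk T M g (E l) z)
      = (\<Sum>l<N. integral\<^sup>L (jordan_pos \<rho>) (Kk T M g (E l)))" for N
    by (rule Bochner_Integration.integral_sum) (rule Kk_int[OF sm El])
  ultimately show ?thesis by (simp add: sums_def)
qed

lemma F_sm:
  assumes sm: "\<mu> \<in> signed_measures"
  shows "transF T M g \<mu> \<in> signed_measures"
  unfolding signed_measures_def
proof (intro CollectI conjI allI impI)
  show "transF T M g \<mu> A = 0" if "A \<notin> sets PS" for A using that by (simp add: transF_def)
  show "transF T M g \<mu> {} = 0"
  proof -
    have "Kk T M g {} = (\<lambda>_. 0)" by (simp add: Kk_def fun_eq_iff)
    then show ?thesis by (simp add: tF_eq[OF sm] si_eq)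
  qed
  fix E :: "nat \<Rightarrow> (real^'n) set" assume E: "range E \<subseteq> sets PS" and d: "disjoint_family E"
  have EU: "(\<Union>l. E l) \<in> sets PS" using E by auto
  have El: "E l \<in> sets PS" for l using E by auto
  show "(\<lambda>k. transF T M g \<mu> (E k)) sums transF T M g \<mu> (\<Union> (range E))"
    unfolding tF_eq[OF sm El] tF_eq[OF sm EU] si_eq
    by (intro sums_diff int_Kk_sums[OF sm E d] int_Kk_sums[OF sm_uminus[OF sm] E d])
qed

lemma F_lin:
  assumes sm: "\<mu> \<in> signed_measures" "\<nu> \<in> signed_measures"
  shows "transF T M g (\<lambda>A. a * \<mu> A + b * \<nu> A) = (\<lambda>A. a * transF T M g \<mu> A + b * transF T M g \<nu> A)"
proof
  fix A :: "(real^'n) set"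
  show "transF T M g (\<lambda>A. a * \<mu> A + b * \<nu> A) A = a * transF T M g \<mu> A + b * transF T M g \<nu> A"
  proof (cases "A \<in> sets PS")
    case True
    show ?thesis unfolding tF_eq[OF sm_lin[OF sm] True] tF_eq[OF sm(1) True] tF_eq[OF sm(2) True]
      by (rule si_lin[OF sm Kk_meas[OF True] Kk_bound])
  next
    case False then show ?thesis by (simp add: transF_def)
  qed
qed

lemma int_Kk_Omega:
  assumes sm: "\<rho> \<in> signed_measures"
  shows "integral\<^sup>L (jordan_pos \<rho>) (Kk T M g prob_simplex) = pos \<rho> prob_simplex"
proof -
  have "integral\<^sup>L (jordan_pos \<rho>) (Kk T M g prob_simplex) = integral\<^sup>L (jordan_pos \<rho>) (\<lambda>_. 1::real)"
    by (rule Bochner_Integration.integral_cong) (auto simp: Kk_Omega)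
  also have "\<dots> = pos \<rho> prob_simplex" by (simp add: jp_measure[OF sm Omega_PS])
  finally show ?thesis .
qed

lemma F_total:
  assumes sm: "\<mu> \<in> signed_measures"
  shows "transF T M g \<mu> prob_simplex = \<mu> prob_simplex"
  unfolding tF_eq[OF sm Omega_PS] si_eq int_Kk_Omega[OF sm] int_Kk_Omega[OF sm_uminus[OF sm]]
  using pos_decomp[OF sm Omega_PS] by simp

lemma F_tv:
  assumes sm: "\<mu> \<in> signed_measures"
  shows "tv_norm (transF T M g \<mu>) \<le> pos \<mu> prob_simplex + pos (\<lambda>A. - \<mu> A) prob_simplex"
    "bdd_above (parts (transF T M g \<mu>))"
proof -
  let ?P = "jordan_pos \<mu>" and ?N = "jordan_pos (\<lambda>A. - \<mu> A)"
  have *: "(\<Sum>l<k. \<bar>transF T M g \<mu> (E l)\<bar>) \<le> pos \<mu> prob_simplex + pos (\<lambda>A. - \<mu> A) prob_simplex"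
    if E: "\<forall>i<k. E i \<in> sets PS" and d: "disjoint_family_on E {..<k}" and u: "(\<Union>i<k. E i) = prob_simplex"
    for k :: nat and E
  proof -
    have IP: "integrable ?P (Kk T M g (E l))" "integrable ?N (Kk T M g (E l))" if "l < k" for l
      using Kk_int[OF sm] Kk_int[OF sm_uminus[OF sm]] E that by auto
    have nn: "0 \<le> integral\<^sup>L ?P (Kk T M g (E l))" "0 \<le> integral\<^sup>L ?N (Kk T M g (E l))" for l
      by (intro integral_nonneg_AE AE_I2 Kk_nonneg)+
    have "(\<Sum>l<k. \<bar>transF T M g \<mu> (E l)\<bar>)
        \<le> (\<Sum>l<k. integral\<^sup>L ?P (Kk T M g (E l)) + integral\<^sup>L ?N (Kk T M g (E l)))"
    proof (rule sum_mono)
      fix l assume "l \<in> {..<k}"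
      then have "transF T M g \<mu> (E l) = integral\<^sup>L ?P (Kk T M g (E l)) - integral\<^sup>L ?N (Kk T M g (E l))"
        using E tF_eq[OF sm] si_eq by auto
      then show "\<bar>transF T M g \<mu> (E l)\<bar> \<le> integral\<^sup>L ?P (Kk T M g (E l)) + integral\<^sup>L ?N (Kk T M g (E l))"
        using nn[of l] by simp
    qed
    also have "\<dots> = integral\<^sup>L ?P (\<lambda>z. \<Sum>l<k. Kk T M g (E l) z) + integral\<^sup>L ?N (\<lambda>z. \<Sum>l<k. Kk T M g (E l) z)"
      using IP by (simp add: Bochner_Integration.integral_sum sum.distrib)
    also have "(\<lambda>z. \<Sum>l<k. Kk T M g (E l) z) = Kk T M g prob_simplex"
      using Kk_fin_add[OF d] u by auto
    also have "integral\<^sup>L ?P (Kk T M g prob_simplex) + integral\<^sup>L ?N (Kk T M g prob_simplex)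
        = pos \<mu> prob_simplex + pos (\<lambda>A. - \<mu> A) prob_simplex"
      using int_Kk_Omega[OF sm] int_Kk_Omega[OF sm_uminus[OF sm]] by simp
    finally show ?thesis .
  qed
  show "tv_norm (transF T M g \<mu>) \<le> pos \<mu> prob_simplex + pos (\<lambda>A. - \<mu> A) prob_simplex"
    "bdd_above (parts (transF T M g \<mu>))"
    by (rule tv_upper_gen, rule *, assumption+)+
qed

lemma F_nonneg:
  assumes sm: "\<mu> \<in> signed_measures" and nn: "\<And>A. A \<in> sets PS \<Longrightarrow> 0 \<le> \<mu> A"
    and A: "A \<in> sets PS"
  shows "0 \<le> transF T M g \<mu> A"
proof -
  let ?N = "jordan_pos (\<lambda>A. - \<mu> A)"
  have "pos (\<lambda>A. - \<mu> A) prob_simplex \<le> 0" by (rule pos_least) (use nn in auto)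
  then have "emeasure ?N (space ?N) = 0"
    using jp_emeasure[OF sm_uminus[OF sm] Omega_PS] pos_nonneg[OF sm_uminus[OF sm], of prob_simplex] by simp
  then have "space ?N \<in> null_sets ?N" by (auto simp: null_sets_def Omega_PS)
  then have "AE z in ?N. Kk T M g A z = 0" by (rule AE_I') auto
  then have "integral\<^sup>L ?N (Kk T M g A) = 0" by (rule integral_eq_zero_AE)
  moreover have "0 \<le> integral\<^sup>L (jordan_pos \<mu>) (Kk T M g A)" by (intro integral_nonneg_AE AE_I2 Kk_nonneg)
  ultimately show ?thesis unfolding tF_eq[OF sm A] si_eq by simp
qed

end



theorem lemma2p23:
  fixes T :: "real^'n::finite^'n"
    and M :: "'o::finite \<Rightarrow> real^'m::finite^'n"
    and g :: "real^'n \<Rightarrow> 'o"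
  assumes "stochastic T"
    and "\<And>i. stochastic (M i)"
    and "g \<in> measurable PS (count_space UNIV)"
  shows "(\<forall>\<mu>\<in>signed_measures. transF T M g \<mu> \<in> signed_measures)
    \<and> (\<forall>\<mu>\<in>signed_measures. \<forall>\<nu>\<in>signed_measures. \<forall>a b::real.
          transF T M g (\<lambda>A. a * \<mu> A + b * \<nu> A)
            = (\<lambda>A. a * transF T M g \<mu> A + b * transF T M g \<nu> A))
    \<and> bdd_above {tv_norm (transF T M g \<mu>) | \<mu>. \<mu> \<in> signed_measures \<and> tv_norm \<mu> \<le> 1}
    \<and> Sup {tv_norm (transF T M g \<mu>) | \<mu>. \<mu> \<in> signed_measures \<and> tv_norm \<mu> \<le> 1} = 1"
proof -
  note F_sm = F_sm[where T=T and M=M and g=g, OF assms(1) assms(2) assms(3)]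
  note F_lin = F_lin[where T=T and M=M and g=g, OF assms(1) assms(2) assms(3)]
  note F_tv = F_tv[where T=T and M=M and g=g, OF assms(1) assms(2) assms(3)]
  note F_total = F_total[where T=T and M=M and g=g, OF assms(1) assms(2) assms(3)]
  define S where "S = {tv_norm (transF T M g \<mu>) | \<mu>. \<mu> \<in> signed_measures \<and> tv_norm \<mu> \<le> 1}"
  have le: "x \<le> 1" if "x \<in> S" for x
  proof -
    from that obtain \<mu> where \<mu>: "\<mu> \<in> signed_measures" "tv_norm \<mu> \<le> 1" "x = tv_norm (transF T M g \<mu>)"
      unfolding S_def by blast
    show ?thesis using F_tv(1)[OF \<mu>(1)] tv_lower[OF \<mu>(1)] \<mu>(2,3) by linarith
  qed
  have bdd: "bdd_above S" using le by (intro bdd_aboveI) 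
  define z0 :: "real^'n" where "z0 = axis undefined 1"
  have z0: "z0 \<in> prob_simplex" unfolding z0_def prob_simplex_def by (simp add: axis_def)
  define \<delta> where "\<delta> A = (if A \<in> sets PS then indicator A z0 else (0::real))" for A :: "(real^'n) set"
  have d_sm: "\<delta> \<in> signed_measures" unfolding signed_measures_def
  proof (intro CollectI conjI allI impI)
    show "\<delta> A = 0" if "A \<notin> sets PS" for A using that by (simp add: \<delta>_def)
    show "\<delta> {} = 0" by (simp add: \<delta>_def)
    fix E :: "nat \<Rightarrow> (real^'n) set" assume E: "range E \<subseteq> sets PS" and d: "disjoint_family E"
    have EU: "(\<Union>l. E l) \<in> sets PS" using E by auto
    have "\<delta> (E l) = indicator (E l) z0" for l using E by (auto simp: \<delta>_def)
    then show "(\<lambda>k. \<delta> (E k)) sums \<delta> (\<Union> (range E))"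
      using indicator_sums[OF d, of z0] EU by (simp add: \<delta>_def)
  qed
  have d_tv: "tv_norm \<delta> \<le> 1"
  proof -
    have "pos \<delta> prob_simplex \<le> 1" by (rule pos_least) (auto simp: \<delta>_def indicator_def)
    moreover have "pos (\<lambda>A. - \<delta> A) prob_simplex \<le> 0" by (rule pos_least) (auto simp: \<delta>_def indicator_def)
    ultimately show ?thesis using tv_upper(1)[OF d_sm] by linarith
  qed
  have "\<delta> prob_simplex = 1" using z0 Omega_PS by (simp add: \<delta>_def)
  then have "\<bar>transF T M g \<delta> prob_simplex\<bar> = 1" using F_total[OF d_sm] by simp
  moreover have "\<bar>transF T M g \<delta> prob_simplex\<bar> \<le> tv_norm (transF T M g \<delta>)"
    unfolding tv_norm_parts by (rule cSup_upper[OF parts_Omega F_tv(2)[OF d_sm]])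
  moreover have mem: "tv_norm (transF T M g \<delta>) \<in> S" unfolding S_def using d_sm d_tv by blast
  ultimately have one: "1 \<in> S" using le[OF mem] by (metis antisym)
  have "Sup S = 1" by (rule cSup_eq_maximum[OF one le])
  then show ?thesis using F_sm F_lin bdd unfolding S_def by blast
qed



end
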